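(* Let $d\ge1$, $n\ge3$ and $\lambda\in\mathcal{P}(d,n)$. Then $\lambda\in\mathcal{R}(d,n)$ if and only if the trivial representation of the subgroup $\langle s_1,s_2\rangle\cong\mathfrak{S}_3$ of $G(d,1,n)$ is not a direct summand of $\mathrm{Res}^{G(d,1,n)}_{\langle s_1,s_2\rangle}(E^\lambda)$.
   Context: Let $d,n\ge1$ be integers and $u$ an indeterminate. The Yokonuma–Hecke algebra $\mathrm{Y}_{d,n}(u)$ is the associative $\mathbb{C}[u,u^{-1}]$-algebra generated by $g_1,\dots,g_{n-1},t_1,\dots,t_n$ subject to: $g_ig_j=g_jg_i$ for $|i-j|>1$; $g_ig_{i+1}g_i=g_{i+1}g_ig_{i+1}$ for $1\le i\le n-2$; $t_it_j=t_jt_i$ for all $i,j$; $t_jg_i=g_it_{s_i(j)}$ for all $i,j$, where $s_i$ is the transposition $(i,i+1)$; $t_j^d=1$ for all $j$; and $g_i^2=1+(u-1)e_i+(u-1)e_ig_i$, where $e_i=\frac1d\sum_{s=0}^{d-1}t_i^st_{i+1}^{-s}$. For $n\ge3$, the Yokonuma–Temperley–Lieb algebra $\mathrm{YTL}_{d,n}(u)$ is the quotient of $\mathrm{Y}_{d,n}(u)$ by the two-sided ideal generated by the elements $g_ig_{i+1}g_i+g_ig_{i+1}+g_{i+1}g_i+g_i+g_{i+1}+1$, $1\le i\le n-2$. For a $\mathbb{C}[u,u^{-1}]$-algebra $B$, write $\mathbb{C}(u)B=\mathbb{C}(u)\otimes_{\mathbb{C}[u,u^{-1}]}B$. A $d$-partition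 of $n$ is a $d$-tuple $\lambda=(\lambda^{(0)},\dots,\lambda^{(d-1)})$ of partitions whose sizes sum to $n$; $\mathcal{P}(d,n)$ denotes the set of them. Let $G(d,1,n)=(\mathbb{Z}/d\mathbb{Z})^n\rtimes\mathfrak{S}_n$, with $s_i\in\mathfrak S_n\subset G(d,1,n)$ the transposition $(i,i+1)$. Its irreducible complex representations $E^\lambda$, $\lambda\in\mathcal P(d,n)$, are labelled in the standard (Specht) way: with $k_i=|\lambda^{(i)}|$, $E^\lambda$ is induced from $\prod_{i=0}^{d-1}G(d,1,k_i)$ of the outer tensor product whose $i$-th factor is the representation on which each coordinate of $(\mathbb Z/d\mathbb Z)^{k_i}$ acts by the character sending a generator to $\xi^i$ ($\xi$ a fixed primitive $d$-th root of unity) and $\mathfrak{S}_{k_i}$ acts through the Specht module of $\lambda^{(i)}$. The algebra $\mathbb{C}(u)\mathrm{Y}_{d,n}(u)$ is split semisimple with irreducible representations $\rho^\lambda$, $\lambda\in\mathcal P(d,n)$, where $\rho^\lambda$ specializes at $u=1$ to $E^\lambda$. Let $\mathcal{R}(d,n)$ be the set of $\lambda\in\mathcal P(d,n)$ such that $\rho^\lambda(g_1g_2g_1+g_1g_2+g_2g_1+g_1+g_2+1)=0$; equivalently the $\rho^\lambda$ with $\lambda\in\mathcal R(d,n)$ are exactly the irreducible representations of $\mathbb{C}(u)\mathrm{YTL}_{d,n}(u)$. *)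

theory Defs
  imports Complex_Main "Jordan_Normal_Form.Matrix" "HOL-Computational_Algebra.Fraction_Field"
    "HOL-Computational_Algebra.Polynomial" "HOL-Combinatorics.Permutations"
begin

definition is_partition :: "nat list \<Rightarrow> bool" where
  "is_partition p \<longleftrightarrow> sorted_wrt (\<ge>) p \<and> (\<forall>x\<in>set p. 0 < x)"

definition dpartitions :: "nat \<Rightarrow> nat \<Rightarrow> (nat \<Rightarrow> nat list) set" where
  "dpartitions d n = {lam. (\<forall>i<d. is_partition (lam i)) \<and> (\<forall>i\<ge>d. lam i = [])
      \<and> (\<Sum>i<d. sum_list (lam i)) = n}"

text \<open>An element (a, sigma) stands for t_1^(a 1) ... t_n^(a n) sigma, where
  sigma t_j sigma^(-1) = t_(sigma j).  Positions are 1..n.\<close>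
type_synonym gelt = "(nat \<Rightarrow> nat) \<times> (nat \<Rightarrow> nat)"

definition Gset :: "nat \<Rightarrow> nat \<Rightarrow> gelt set" where
  "Gset d n = {(a, \<sigma>). (\<forall>j. (j \<in> {1..n} \<longrightarrow> a j < d) \<and> (j \<notin> {1..n} \<longrightarrow> a j = 0))
                      \<and> \<sigma> permutes {1..n}}"

definition gmul :: "nat \<Rightarrow> gelt \<Rightarrow> gelt \<Rightarrow> gelt" where
  "gmul d x y = ((\<lambda>k. (fst x k + fst y (inv_into UNIV (snd x) k)) mod d), snd x \<circ> snd y)"

definition gT :: "nat \<Rightarrow> nat \<Rightarrow> gelt" where
  "gT d j = ((\<lambda>k. if k = j then 1 mod d else 0), id)"

definition gS :: "nat \<Rightarrow> gelt" where
  "gS i = ((\<lambda>k. 0), Transposition.transpose i (Suc i))"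

definition gconv :: "nat \<Rightarrow> nat \<Rightarrow> (gelt \<Rightarrow> complex) \<Rightarrow> (gelt \<Rightarrow> complex) \<Rightarrow> gelt \<Rightarrow> complex" where
  "gconv d n f h = (\<lambda>x. \<Sum>(y,z) \<in> {(y,z). y \<in> Gset d n \<and> z \<in> Gset d n \<and> gmul d y z = x}. f y * h z)"

definition gdelta :: "gelt \<Rightarrow> gelt \<Rightarrow> complex" where
  "gdelta g = (\<lambda>x. if x = g then 1 else 0)"

definition galg :: "nat \<Rightarrow> nat \<Rightarrow> (gelt \<Rightarrow> complex) set" where
  "galg d n = {f. \<forall>x. x \<notin> Gset d n \<longrightarrow> f x = 0}"

definition gact :: "nat \<Rightarrow> nat \<Rightarrow> gelt \<Rightarrow> (gelt \<Rightarrow> complex) \<Rightarrow> gelt \<Rightarrow> complex" where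
  "gact d n g f = gconv d n (gdelta g) f"

definition offs :: "(nat \<Rightarrow> nat list) \<Rightarrow> nat \<Rightarrow> nat" where
  "offs lam i = (\<Sum>l<i. sum_list (lam l))"

text \<open>Entry of the standard multitableau: component i, row r, column c (0-based), filled row by row.\<close>
definition tentry :: "(nat \<Rightarrow> nat list) \<Rightarrow> nat \<Rightarrow> nat \<Rightarrow> nat \<Rightarrow> nat" where
  "tentry lam i r c = offs lam i + sum_list (take r (lam i)) + c + 1"

definition rowset :: "(nat \<Rightarrow> nat list) \<Rightarrow> nat \<Rightarrow> nat \<Rightarrow> nat set" where
  "rowset lam i r = {tentry lam i r c | c. c < lam i ! r}"

definition colset :: "(nat \<Rightarrow> nat list) \<Rightarrow> nat \<Rightarrow> nat \<Rightarrow> nat set" where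
  "colset lam i c = {tentry lam i r c | r. r < length (lam i) \<and> c < lam i ! r}"

definition rowgroup :: "nat \<Rightarrow> nat \<Rightarrow> (nat \<Rightarrow> nat list) \<Rightarrow> (nat \<Rightarrow> nat) set" where
  "rowgroup d n lam = {\<sigma>. \<sigma> permutes {1..n} \<and>
      (\<forall>i<d. \<forall>r<length (lam i). \<sigma> ` rowset lam i r = rowset lam i r)}"

definition colgroup :: "nat \<Rightarrow> nat \<Rightarrow> (nat \<Rightarrow> nat list) \<Rightarrow> (nat \<Rightarrow> nat) set" where
  "colgroup d n lam = {\<sigma>. \<sigma> permutes {1..n} \<and>
      (\<forall>i<d. \<forall>c. \<sigma> ` colset lam i c = colset lam i c)}"

definition blk :: "nat \<Rightarrow> (nat \<Rightarrow> nat list) \<Rightarrow> nat \<Rightarrow> nat" where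
  "blk d lam j = (LEAST i. i < d \<and> offs lam i < j \<and> j \<le> offs lam (Suc i))"

definition xi :: "nat \<Rightarrow> complex" where
  "xi d = cis (2 * pi / real d)"

definition chi :: "nat \<Rightarrow> nat \<Rightarrow> (nat \<Rightarrow> nat list) \<Rightarrow> (nat \<Rightarrow> nat) \<Rightarrow> complex" where
  "chi d n lam a = (\<Prod>j\<in>{1..n}. xi d ^ (blk d lam j * a j))"

definition echi :: "nat \<Rightarrow> nat \<Rightarrow> (nat \<Rightarrow> nat list) \<Rightarrow> gelt \<Rightarrow> complex" where
  "echi d n lam = (\<lambda>x. if x \<in> Gset d n \<and> snd x = id
       then cnj (chi d n lam (fst x)) / of_nat d ^ n else 0)"

definition ysym :: "nat \<Rightarrow> nat \<Rightarrow> (nat \<Rightarrow> nat list) \<Rightarrow> gelt \<Rightarrow> complex" where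
  "ysym d n lam = gconv d n
     (\<lambda>x. if fst x = (\<lambda>_. 0) \<and> snd x \<in> rowgroup d n lam then 1 else 0)
     (\<lambda>x. if fst x = (\<lambda>_. 0) \<and> snd x \<in> colgroup d n lam then of_int (sign (snd x)) else 0)"

text \<open>E^lam realised as the left ideal C[G] * e_chi * c_T of the group algebra
  (isomorphic to Ind from prod G(d,1,k_i) of (chi tensor Specht module)).\<close>
definition Emod :: "nat \<Rightarrow> nat \<Rightarrow> (nat \<Rightarrow> nat list) \<Rightarrow> (gelt \<Rightarrow> complex) set" where
  "Emod d n lam = {gconv d n f (gconv d n (echi d n lam) (ysym d n lam)) | f. f \<in> galg d n}"

definition triv_summand :: "nat \<Rightarrow> nat \<Rightarrow> (nat \<Rightarrow> nat list) \<Rightarrow> bool" where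
  "triv_summand d n lam \<longleftrightarrow> (\<exists>v W.
      v \<in> Emod d n lam \<and> v \<noteq> (\<lambda>_. 0) \<and>
      gact d n (gS 1) v = v \<and> gact d n (gS 2) v = v \<and>
      W \<subseteq> Emod d n lam \<and> (\<lambda>_. 0) \<in> W \<and>
      (\<forall>w1\<in>W. \<forall>w2\<in>W. (\<lambda>x. w1 x + w2 x) \<in> W) \<and>
      (\<forall>c::complex. \<forall>w\<in>W. (\<lambda>x. c * w x) \<in> W) \<and>
      (\<forall>w\<in>W. gact d n (gS 1) w \<in> W \<and> gact d n (gS 2) w \<in> W) \<and>
      (\<forall>x\<in>Emod d n lam. \<exists>!(c, w). w \<in> W \<and> x = (\<lambda>g. c * v g + w g)))"

type_synonym ratf = "complex poly fract"

definition uu :: ratf where "uu = Fract [:0, 1:] 1"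

definition swp :: "nat \<Rightarrow> nat \<Rightarrow> nat" where
  "swp i j = (if j = i then Suc i else if j = Suc i then i else j)"

definition Eidem :: "nat \<Rightarrow> nat \<Rightarrow> (nat \<Rightarrow> 'a::field mat) \<Rightarrow> nat \<Rightarrow> 'a mat" where
  "Eidem d m T i = (inverse (of_nat d) :: 'a) \<cdot>\<^sub>m
      foldr (\<lambda>s A. T i ^\<^sub>m s * T (Suc i) ^\<^sub>m (d - s) + A) [0..<d] (0\<^sub>m m m)"

definition is_Yrep :: "nat \<Rightarrow> nat \<Rightarrow> 'a::field \<Rightarrow> nat \<Rightarrow> (nat \<Rightarrow> 'a mat) \<Rightarrow> (nat \<Rightarrow> 'a mat) \<Rightarrow> bool" where
  "is_Yrep d n u m G T \<longleftrightarrow>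
     (\<forall>i\<in>{1..<n}. G i \<in> carrier_mat m m) \<and> (\<forall>j\<in>{1..n}. T j \<in> carrier_mat m m) \<and>
     (\<forall>i\<in>{1..<n}. \<forall>j\<in>{1..<n}. (i > j + 1 \<or> j > i + 1) \<longrightarrow> G i * G j = G j * G i) \<and>
     (\<forall>i\<in>{1..n-2}. G i * G (Suc i) * G i = G (Suc i) * G i * G (Suc i)) \<and>
     (\<forall>i\<in>{1..n}. \<forall>j\<in>{1..n}. T i * T j = T j * T i) \<and>
     (\<forall>i\<in>{1..<n}. \<forall>j\<in>{1..n}. T j * G i = G i * T (swp i j)) \<and>
     (\<forall>j\<in>{1..n}. T j ^\<^sub>m d = 1\<^sub>m m) \<and>
     (\<forall>i\<in>{1..<n}. G i * G i = 1\<^sub>m m + (u - 1) \<cdot>\<^sub>m Eidem d m T i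
                      + (u - 1) \<cdot>\<^sub>m (Eidem d m T i * G i))"

definition irreducible_rep :: "nat \<Rightarrow> nat \<Rightarrow> (nat \<Rightarrow> 'a::field mat) \<Rightarrow> (nat \<Rightarrow> 'a mat) \<Rightarrow> bool" where
  "irreducible_rep n m G T \<longleftrightarrow> m > 0 \<and>
     (\<forall>W. W \<subseteq> carrier_vec m \<and> 0\<^sub>v m \<in> W \<and>
          (\<forall>v\<in>W. \<forall>w\<in>W. v + w \<in> W) \<and> (\<forall>c. \<forall>v\<in>W. c \<cdot>\<^sub>v v \<in> W) \<and>
          (\<forall>i\<in>{1..<n}. \<forall>v\<in>W. G i *\<^sub>v v \<in> W) \<and> (\<forall>j\<in>{1..n}. \<forall>v\<in>W. T j *\<^sub>v v \<in> W)
        \<longrightarrow> W = {0\<^sub>v m} \<or> W = carrier_vec m)"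

definition spec1 :: "ratf \<Rightarrow> complex \<Rightarrow> bool" where
  "spec1 f c \<longleftrightarrow> (\<exists>p q. poly q 1 \<noteq> 0 \<and> f = Fract p q \<and> c = poly p 1 / poly q 1)"

definition spec_mat :: "ratf mat \<Rightarrow> complex mat \<Rightarrow> bool" where
  "spec_mat A B \<longleftrightarrow> dim_row A = dim_row B \<and> dim_col A = dim_col B \<and>
     (\<forall>i<dim_row A. \<forall>j<dim_col A. spec1 (A $$ (i, j)) (B $$ (i, j)))"

definition iso_to_E :: "nat \<Rightarrow> nat \<Rightarrow> (nat \<Rightarrow> nat list) \<Rightarrow> nat \<Rightarrow> (nat \<Rightarrow> complex mat) \<Rightarrow> (nat \<Rightarrow> complex mat) \<Rightarrow> bool" where
  "iso_to_E d n lam m Gb Tb \<longleftrightarrow> (\<exists>\<phi>. bij_betw \<phi> (carrier_vec m) (Emod d n lam) \<and>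
     (\<forall>v\<in>carrier_vec m. \<forall>w\<in>carrier_vec m. \<phi> (v + w) = (\<lambda>x. \<phi> v x + \<phi> w x)) \<and>
     (\<forall>c. \<forall>v\<in>carrier_vec m. \<phi> (c \<cdot>\<^sub>v v) = (\<lambda>x. c * \<phi> v x)) \<and>
     (\<forall>i\<in>{1..<n}. \<forall>v\<in>carrier_vec m. \<phi> (Gb i *\<^sub>v v) = gact d n (gS i) (\<phi> v)) \<and>
     (\<forall>j\<in>{1..n}. \<forall>v\<in>carrier_vec m. \<phi> (Tb j *\<^sub>v v) = gact d n (gT d j) (\<phi> v)))"

text \<open>rho is the irreducible representation rho^lam of C(u)Y_{d,n}(u): it is irreducible and,
  in a suitable basis, its matrices are regular at u = 1 and specialise to E^lam.\<close>
definition is_rho :: "nat \<Rightarrow> nat \<Rightarrow> (nat \<Rightarrow> nat list) \<Rightarrow> nat \<Rightarrow> (nat \<Rightarrow> ratf mat) \<Rightarrow> (nat \<Rightarrow> ratf mat) \<Rightarrow> bool" where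
  "is_rho d n lam m G T \<longleftrightarrow> is_Yrep d n uu m G T \<and> irreducible_rep n m G T \<and>
     (\<exists>P Pi Gb Tb. P \<in> carrier_mat m m \<and> Pi \<in> carrier_mat m m \<and> P * Pi = 1\<^sub>m m \<and>
        (\<forall>i\<in>{1..<n}. spec_mat (Pi * G i * P) (Gb i)) \<and>
        (\<forall>j\<in>{1..n}. spec_mat (Pi * T j * P) (Tb j)) \<and>
        iso_to_E d n lam m Gb Tb)"

definition Xelt :: "nat \<Rightarrow> (nat \<Rightarrow> ratf mat) \<Rightarrow> ratf mat" where
  "Xelt m G = G 1 * G 2 * G 1 + G 1 * G 2 + G 2 * G 1 + G 1 + G 2 + 1\<^sub>m m"

end

theory Submission
  imports Defs "Jordan_Normal_Form.Determinant"
begin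

lemma spec1_unique: "spec1 f a \<Longrightarrow> spec1 f b \<Longrightarrow> a = b"
  unfolding spec1_def
proof (elim exE conjE)
  fix p q p' q' assume q: "poly q 1 \<noteq> 0" and f: "f = Fract p q" and a: "a = poly p 1 / poly q 1"
    and q': "poly q' 1 \<noteq> 0" and f': "f = Fract p' q'" and b: "b = poly p' 1 / poly q' 1"
  from q q' have "q \<noteq> 0" "q' \<noteq> 0" by auto
  with f f' have "p * q' = p' * q" by (simp add: eq_fract)
  hence "poly (p * q') 1 = poly (p' * q) 1" by simp
  thus "a = b" unfolding a b using q q' by (simp add: frac_eq_eq mult.commute)
qed

lemma spec1_add: "spec1 f a \<Longrightarrow> spec1 g b \<Longrightarrow> spec1 (f + g) (a + b)"
  unfolding spec1_def
proof (elim exE conjE)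
  fix p q p' q' assume q: "poly q 1 \<noteq> 0" and f: "f = Fract p q" and a: "a = poly p 1 / poly q 1"
    and q': "poly q' 1 \<noteq> 0" and f': "g = Fract p' q'" and b: "b = poly p' 1 / poly q' 1"
  from q q' have "q \<noteq> 0" "q' \<noteq> 0" by auto
  show "\<exists>p q. poly q 1 \<noteq> 0 \<and> f + g = Fract p q \<and> a + b = poly p 1 / poly q 1"
    by (rule exI[of _ "p * q' + p' * q"], rule exI[of _ "q * q'"])
      (use q q' f f' \<open>q \<noteq> 0\<close> \<open>q' \<noteq> 0\<close> in \<open>auto simp: a b add_frac_eq mult.commute\<close>)
qed

lemma spec1_mult: "spec1 f a \<Longrightarrow> spec1 g b \<Longrightarrow> spec1 (f * g) (a * b)"
  unfolding spec1_def
proof (elim exE conjE)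
  fix p q p' q' assume q: "poly q 1 \<noteq> 0" and f: "f = Fract p q" and a: "a = poly p 1 / poly q 1"
    and q': "poly q' 1 \<noteq> 0" and f': "g = Fract p' q'" and b: "b = poly p' 1 / poly q' 1"
  show "\<exists>p q. poly q 1 \<noteq> 0 \<and> f * g = Fract p q \<and> a * b = poly p 1 / poly q 1"
    by (rule exI[of _ "p * p'"], rule exI[of _ "q * q'"])
      (use q q' f f' in \<open>auto simp: a b\<close>)
qed

lemma spec1_const: "spec1 (Fract [:c:] 1) c"
  unfolding spec1_def by (rule exI[of _ "[:c:]"], rule exI[of _ 1]) auto

lemma spec1_zero: "spec1 0 0"
  using spec1_const[of 0] by (simp add: Zero_fract_def)

lemma spec1_one: "spec1 1 1"
  using spec1_const[of 1] by (simp add: One_fract_def one_pCons)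

lemma spec1_of_nat: "spec1 (of_nat k) (of_nat k)"
  unfolding spec1_def of_nat_fract by (rule exI[of _ "of_nat k"], rule exI[of _ 1]) (auto simp: of_nat_poly)

lemma spec1_inv_nat: "k > 0 \<Longrightarrow> spec1 (inverse (of_nat k)) (inverse (of_nat k))"
  unfolding spec1_def of_nat_fract by (rule exI[of _ 1], rule exI[of _ "of_nat k"]) (auto simp: of_nat_poly inverse_eq_divide One_fract_def)

lemma uu1_eq: "uu - 1 = Fract [:-1,1:] 1"
  unfolding uu_def by (simp add: One_fract_def one_pCons)

lemma spec1_uu1: "spec1 (uu - 1) 0"
  unfolding spec1_def uu_def by (rule exI[of _ "[:-1,1:]"], rule exI[of _ 1]) (auto simp: One_fract_def one_pCons)

lemma spec1_sum: "finite S \<Longrightarrow> (\<And>i. i \<in> S \<Longrightarrow> spec1 (f i) (a i)) \<Longrightarrow> spec1 (\<Sum>i\<in>S. f i) (\<Sum>i\<in>S. a i)"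
  by (induct S rule: finite_induct) (auto intro: spec1_add spec1_zero)

lemma spec1_zero_div: assumes "spec1 f 0" shows "\<exists>g c. spec1 g c \<and> f = (uu - 1) * g"
proof -
  from assms obtain p q where q: "poly q 1 \<noteq> 0" and f: "f = Fract p q" and a: "0 = poly p 1 / poly q 1"
    unfolding spec1_def by auto
  hence "poly p 1 = 0" by simp
  hence "[:-1,1:] dvd p" by (simp add: poly_eq_0_iff_dvd)
  then obtain r where r: "p = [:-1,1:] * r" by (auto elim: dvdE)
  have "spec1 (Fract r q) (poly r 1 / poly q 1)" unfolding spec1_def using q by auto
  moreover have "f = (uu - 1) * Fract r q" using q r f unfolding uu1_eq by auto
  ultimately show ?thesis by blast
qed

lemma uu1_nz: "uu - 1 \<noteq> 0"
  unfolding uu1_eq by (simp add: Zero_fract_def eq_fract)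

lemma ratf_zero_if_all_div:
  assumes "\<And>k. k \<ge> 1 \<Longrightarrow> \<exists>g c. spec1 g c \<and> f = (uu - 1) ^ k * g"
  shows "f = 0"
proof (rule ccontr)
  assume nz: "f \<noteq> 0"
  obtain p q where f: "f = Fract p q" and q: "q \<noteq> 0" by (cases f) auto
  with nz have p: "p \<noteq> 0" by (auto simp: Zero_fract_def eq_fract)
  define k where "k = Suc (order 1 p)"
  from assms[of k] obtain g c where "spec1 g c" "f = (uu - 1) ^ k * g" unfolding k_def by auto
  then obtain p' q' where q': "poly q' 1 \<noteq> 0" and e: "Fract p q = (uu - 1) ^ k * Fract p' q'"
    unfolding spec1_def f by auto
  have pw: "(uu - 1) ^ n = Fract ([:-1,1:] ^ n) 1" for n
  proof (induct n)
    case 0 show ?case by (simp add: One_fract_def)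
  next
    case (Suc n)
    have "(uu - 1) ^ Suc n = Fract [:-1,1:] 1 * Fract ([:-1,1:] ^ n) 1"
      by (subst power_Suc, subst Suc.hyps, subst uu1_eq, rule refl)
    also have "\<dots> = Fract ([:-1,1:] ^ Suc n) 1" by (simp only: mult_fract power_Suc) simp
    finally show ?case .
  qed
  from q' have q'0: "q' \<noteq> 0" by auto
  from e have "Fract p q = Fract ([:-1,1:] ^ k * p') q'" by (simp add: pw)
  hence "p * q' = [:-1,1:] ^ k * p' * q" using q q'0 by (simp add: eq_fract)
  hence dv: "[:-1,1:] ^ k dvd p * q'" by (metis dvd_triv_left mult.assoc)
  have "p * q' \<noteq> 0" using p q'0 by simp
  hence "k \<le> order 1 (p * q')" using dv order_divides[of 1 k "p * q'"] by simp
  also have "order 1 (p * q') = order 1 p + order 1 q'" using p q'0 by (simp add: order_mult)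
  also have "order 1 q' = 0" using q' by (simp add: order_0I)
  finally show False unfolding k_def by simp
qed

lemma spec_mat_unique: "spec_mat A B \<Longrightarrow> spec_mat A C \<Longrightarrow> B = C"
  unfolding spec_mat_def by (auto intro!: eq_matI spec1_unique)

lemma spec_mat_add: "spec_mat A B \<Longrightarrow> spec_mat A' B' \<Longrightarrow> dim_row A' = dim_row A \<Longrightarrow> dim_col A' = dim_col A
  \<Longrightarrow> spec_mat (A + A') (B + B')"
  unfolding spec_mat_def by (auto intro!: spec1_add)

lemma spec_mat_mult: assumes "spec_mat A B" "spec_mat A' B'" "dim_row A' = dim_col A"
  shows "spec_mat (A * A') (B * B')"
  unfolding spec_mat_def
proof (intro conjI allI impI)
  fix i j assume i: "i < dim_row (A * A')" and j: "j < dim_col (A * A')"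
  have "(A * A') $$ (i, j) = (\<Sum>k\<in>{0..<dim_col A}. A $$ (i,k) * A' $$ (k,j))"
    using i j assms(3) by (simp add: scalar_prod_def)
  moreover have "(B * B') $$ (i, j) = (\<Sum>k\<in>{0..<dim_col A}. B $$ (i,k) * B' $$ (k,j))"
    using i j assms unfolding spec_mat_def by (simp add: scalar_prod_def)
  ultimately show "spec1 ((A * A') $$ (i, j)) ((B * B') $$ (i, j))"
    using i j assms unfolding spec_mat_def by (auto intro!: spec1_sum spec1_mult)
qed (use assms in \<open>auto simp: spec_mat_def\<close>)

lemma spec_mat_smult: "spec1 c c' \<Longrightarrow> spec_mat A B \<Longrightarrow> spec_mat (c \<cdot>\<^sub>m A) (c' \<cdot>\<^sub>m B)"
  unfolding spec_mat_def by (auto intro!: spec1_mult)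

lemma spec_mat_one: "spec_mat (1\<^sub>m n) (1\<^sub>m n)"
  unfolding spec_mat_def by (auto intro: spec1_one spec1_zero)

lemma spec_mat_zero: "spec_mat (0\<^sub>m n k) (0\<^sub>m n k)"
  unfolding spec_mat_def by (auto intro: spec1_zero)

lemma spec_mat_zero_div: assumes "spec_mat A (0\<^sub>m n k)"
  shows "\<exists>A' B'. spec_mat A' B' \<and> A = (uu - 1) \<cdot>\<^sub>m A'"
proof -
  have ex: "\<forall>i<dim_row A. \<forall>j<dim_col A. \<exists>g c. spec1 g c \<and> A $$ (i,j) = (uu - 1) * g"
    using assms spec1_zero_div unfolding spec_mat_def by auto
  define g where "g = (\<lambda>ij. SOME g. \<exists>c. spec1 g c \<and> A $$ ij = (uu - 1) * g)"
  define c where "c = (\<lambda>ij. SOME c. spec1 (g ij) c)"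
  have gc: "spec1 (g (i,j)) (c (i,j)) \<and> A $$ (i,j) = (uu - 1) * g (i,j)" if "i < dim_row A" "j < dim_col A" for i j
  proof -
    have "\<exists>c. spec1 (g (i,j)) c \<and> A $$ (i,j) = (uu - 1) * g (i,j)"
      unfolding g_def by (rule someI_ex) (use ex that in blast)
    thus ?thesis unfolding c_def by (metis (mono_tags, lifting) someI_ex)
  qed
  show ?thesis
    by (rule exI[of _ "mat (dim_row A) (dim_col A) g"], rule exI[of _ "mat (dim_row A) (dim_col A) c"])
      (auto simp: spec_mat_def gc intro!: eq_matI)
qed

lemma lcomm_add_mat: "(A :: 'a :: comm_monoid_add mat) \<in> carrier_mat nr nc \<Longrightarrow> B \<in> carrier_mat nr nc \<Longrightarrow> C \<in> carrier_mat nr nc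
  \<Longrightarrow> A + (B + C) = B + (A + C)"
  by (intro eq_matI, auto simp: ac_simps)

lemmas msimps = assoc_mult_mat mult_add_distrib_mat add_mult_distrib_mat assoc_add_mat
  left_mult_one_mat right_mult_one_mat comm_add_mat lcomm_add_mat

lemma key_alg:
  fixes g1 g2 k1 k2 k3 :: "'a::comm_ring_1 mat"
  assumes cr[simp]: "g1 \<in> carrier_mat n n" "g2 \<in> carrier_mat n n" "k1 \<in> carrier_mat n n"
    "k2 \<in> carrier_mat n n" "k3 \<in> carrier_mat n n"
  and q1: "g1 * g1 = 1\<^sub>m n + k1 + k1 * g1" and q2: "g2 * g2 = 1\<^sub>m n + k2 + k2 * g2"
  and br: "g1 * g2 * g1 = g2 * g1 * g2"
  and c1: "g2 * k1 = k3 * g2" and c2: "g1 * k2 = k3 * g1" and c3: "g1 * k3 = k2 * g1"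
  shows "(g1 * g2 * g1 + g1 * g2 + g2 * g1 + g1 + g2 + 1\<^sub>m n) * (g1 * g2 * g1 + g1 * g2 + g2 * g1 + g1 + g2 + 1\<^sub>m n)
    = (1\<^sub>m n + (1\<^sub>m n + k2) + (1\<^sub>m n + k3) * (1\<^sub>m n + k2) + (1\<^sub>m n + k1) + (1\<^sub>m n + k3) * (1\<^sub>m n + k1)
        + (1\<^sub>m n + k2) * (1\<^sub>m n + k3) * (1\<^sub>m n + k1))
      * (g1 * g2 * g1 + g1 * g2 + g2 * g1 + g1 + g2 + 1\<^sub>m n)"
proof -
  define X where "X = g1 * g2 * g1 + g1 * g2 + g2 * g1 + g1 + g2 + 1\<^sub>m n"
  define I :: "'a mat" where "I = 1\<^sub>m n"
  have [simp]: "I \<in> carrier_mat n n" "X \<in> carrier_mat n n" unfolding I_def X_def by auto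
  have cm[simp]: "A * B \<in> carrier_mat n n" "A + B \<in> carrier_mat n n"
    if "A \<in> carrier_mat n n" "B \<in> carrier_mat n n" for A B :: "'a mat" using that by auto
  have ms: "A * B * C = A * (B * C)" "A * (B + C) = A * B + A * C" "(A + B) * C = A * C + B * C"
     "A + B + C = A + (B + C)" "A + (B + C) = B + (A + C)"
    if "A \<in> carrier_mat n n" "B \<in> carrier_mat n n" "C \<in> carrier_mat n n" for A B C :: "'a mat"
    using that by (auto simp: mult_add_distrib_mat add_mult_distrib_mat comm_add_mat lcomm_add_mat)
  have ms2: "A + B = B + A" if "A \<in> carrier_mat n n" "B \<in> carrier_mat n n" for A B :: "'a mat"
    using that by (auto simp: comm_add_mat)
  have ms1: "1\<^sub>m n * A = A" "A * 1\<^sub>m n = A" if "A \<in> carrier_mat n n" for A :: "'a mat"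
    using that by auto
  note ms = ms ms1 ms2
  have s1: "X = (1\<^sub>m n + g1) * (1\<^sub>m n + g2 + g2 * g1)"
    unfolding X_def by (simp add: ms)
  define Y where "Y = 1\<^sub>m n + g2 + g2 * g1"
  define Z where "Z = 1\<^sub>m n + g1 + g1 * g2"
  define f1 where "f1 = 1\<^sub>m n + k1"
  define f2 where "f2 = 1\<^sub>m n + k2"
  define f3 where "f3 = 1\<^sub>m n + k3"
  define M where "M = 1\<^sub>m n + f2 + f3 * f2"
  define N where "N = 1\<^sub>m n + f3 + f2 * f3"
  have [simp]: "Y \<in> carrier_mat n n" "Z \<in> carrier_mat n n" "f1 \<in> carrier_mat n n" "f2 \<in> carrier_mat n n"
    "f3 \<in> carrier_mat n n" "M \<in> carrier_mat n n" "N \<in> carrier_mat n n"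
    unfolding Y_def Z_def f1_def f2_def f3_def M_def N_def by auto
  have br': "g2 * (g1 * g2) = g1 * (g2 * g1)" using br by (simp add: ms)
  have s1': "X = (1\<^sub>m n + g1) * Y" using s1 unfolding Y_def .
  have s2: "X = (1\<^sub>m n + g2) * Z" unfolding X_def Z_def by (simp add: ms br')
  have q1': "g1 * (1\<^sub>m n + g1) = f1 * (1\<^sub>m n + g1)" unfolding f1_def by (simp add: ms q1)
  have q2': "g2 * (1\<^sub>m n + g2) = f2 * (1\<^sub>m n + g2)" unfolding f2_def by (simp add: ms q2)
  have s3: "g1 * X = f1 * X"
  proof -
    have "g1 * X = (g1 * (1\<^sub>m n + g1)) * Y" unfolding s1' by (simp add: ms)
    also have "\<dots> = f1 * ((1\<^sub>m n + g1) * Y)" unfolding q1' by (simp add: ms)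
    finally show ?thesis using s1' by simp
  qed
  have s4: "g2 * X = f2 * X"
  proof -
    have "g2 * X = (g2 * (1\<^sub>m n + g2)) * Z" unfolding s2 by (simp add: ms)
    also have "\<dots> = f2 * ((1\<^sub>m n + g2) * Z)" unfolding q2' by (simp add: ms)
    finally show ?thesis using s2 by simp
  qed
  have g2f1: "g2 * f1 = f3 * g2" unfolding f1_def f3_def by (simp add: ms c1)
  have YX: "Y * X = M * X"
  proof -
    have "Y * X = X + g2 * X + g2 * (g1 * X)" unfolding Y_def by (simp add: ms)
    also have "\<dots> = X + f2 * X + (g2 * f1) * X" unfolding s3 s4 by (simp add: ms)
    also have "\<dots> = X + f2 * X + f3 * (g2 * X)" unfolding g2f1 by (simp add: ms)
    also have "\<dots> = M * X" unfolding s4 M_def by (simp add: ms)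
    finally show ?thesis .
  qed
  have c2': "g1 * (k2 * A) = k3 * (g1 * A)" "g1 * (k3 * A) = k2 * (g1 * A)" if "A \<in> carrier_mat n n" for A
  proof -
    have "g1 * (k2 * A) = (g1 * k2) * A" using that by (simp add: ms)
    thus "g1 * (k2 * A) = k3 * (g1 * A)" using that by (simp add: c2 ms)
    have "g1 * (k3 * A) = (g1 * k3) * A" using that by (simp add: ms)
    thus "g1 * (k3 * A) = k2 * (g1 * A)" using that by (simp add: c3 ms)
  qed
  have g1M: "g1 * M = N * g1" unfolding M_def N_def f2_def f3_def by (simp add: ms c2 c3 c2')
  have "X * X = (1\<^sub>m n + g1) * (Y * X)" by (subst (1) s1') (simp add: ms)
  also have "\<dots> = M * X + (g1 * M) * X" unfolding YX by (simp add: ms)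
  also have "\<dots> = M * X + N * (g1 * X)" unfolding g1M by (simp add: ms)
  also have "\<dots> = (M + N * f1) * X" unfolding s3 by (simp add: ms)
  finally have "X * X = (M + N * f1) * X" .
  moreover have "M + N * f1 = 1\<^sub>m n + f2 + f3 * f2 + f1 + f3 * f1 + f2 * f3 * f1"
    unfolding M_def N_def by (simp add: ms)
  ultimately show ?thesis unfolding X_def f1_def f2_def f3_def by simp
qed

lemma smult_smult_mat: "a \<cdot>\<^sub>m (b \<cdot>\<^sub>m (M :: 'a :: semigroup_mult mat)) = (a * b) \<cdot>\<^sub>m M"
  by (rule eq_matI) (auto simp: mult.assoc)

lemma one_smult_mat: "(1 :: 'a :: monoid_mult) \<cdot>\<^sub>m M = M"
  by (rule eq_matI) auto

lemma valuation_arg: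
  fixes A L :: "ratf mat"
  assumes A: "A \<in> carrier_mat m m" and L: "L \<in> carrier_mat m m"
    and sA: "spec_mat A (0\<^sub>m m m)" and sL: "spec_mat L Lb"
    and Lb: "\<And>B. B \<in> carrier_mat m m \<Longrightarrow> Lb * B = 0\<^sub>m m m \<Longrightarrow> B = 0\<^sub>m m m"
    and AA: "A * A = L * A"
  shows "A = 0\<^sub>m m m"
proof -
  let ?c = "uu - 1"
  have cnz: "?c ^ k \<noteq> 0" for k using uu1_nz by simp
  have sc: "spec1 (?c ^ Suc k) 0" for k
  proof (induct k)
    case 0 then show ?case using spec1_uu1 by simp
  next
    case (Suc k) then show ?case using spec1_mult[OF spec1_uu1 Suc] by simp
  qed
  have claim: "\<exists>Ak Bk. spec_mat Ak Bk \<and> A = ?c ^ Suc k \<cdot>\<^sub>m Ak" for k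
  proof (induct k)
    case 0
    from spec_mat_zero_div[OF sA] show ?case by simp
  next
    case (Suc k)
    then obtain Ak Bk where s: "spec_mat Ak Bk" and e: "A = ?c ^ Suc k \<cdot>\<^sub>m Ak" by blast
    have Ak: "Ak \<in> carrier_mat m m" using A unfolding e carrier_mat_def by simp
    have Bk: "Bk \<in> carrier_mat m m" using s Ak unfolding carrier_mat_def spec_mat_def by simp
    have "?c ^ Suc k \<cdot>\<^sub>m (?c ^ Suc k \<cdot>\<^sub>m (Ak * Ak)) = ?c ^ Suc k \<cdot>\<^sub>m (L * Ak)"
    proof -
      define a where "a = ?c ^ Suc k"
      have "(a \<cdot>\<^sub>m Ak) * (a \<cdot>\<^sub>m Ak) = a \<cdot>\<^sub>m (Ak * (a \<cdot>\<^sub>m Ak))"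
        by (rule mult_smult_assoc_mat[OF Ak, of _ m]) (use Ak in simp)
      also have "Ak * (a \<cdot>\<^sub>m Ak) = a \<cdot>\<^sub>m (Ak * Ak)" by (rule mult_smult_distrib[OF Ak Ak])
      finally have 1: "(a \<cdot>\<^sub>m Ak) * (a \<cdot>\<^sub>m Ak) = a \<cdot>\<^sub>m (a \<cdot>\<^sub>m (Ak * Ak))" .
      have 2: "L * (a \<cdot>\<^sub>m Ak) = a \<cdot>\<^sub>m (L * Ak)" by (rule mult_smult_distrib[OF L Ak])
      show ?thesis using AA unfolding e a_def[symmetric] 1 2 .
    qed
    hence pre: "inverse (?c ^ Suc k) \<cdot>\<^sub>m (?c ^ Suc k \<cdot>\<^sub>m (?c ^ Suc k \<cdot>\<^sub>m (Ak * Ak)))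
        = inverse (?c ^ Suc k) \<cdot>\<^sub>m (?c ^ Suc k \<cdot>\<^sub>m (L * Ak))" by simp
    have eq: "?c ^ Suc k \<cdot>\<^sub>m (Ak * Ak) = L * Ak"
      proof -
      have ii: "inverse (?c ^ Suc k) * ?c ^ Suc k = 1" using cnz[of "Suc k"] by (rule left_inverse)
      show ?thesis using pre by (simp only: smult_smult_mat mult.assoc[symmetric] ii one_smult_mat mult_1_left)
    qed
    have "spec_mat (?c ^ Suc k \<cdot>\<^sub>m (Ak * Ak)) (0 \<cdot>\<^sub>m (Bk * Bk))"
      by (rule spec_mat_smult[OF sc spec_mat_mult[OF s s]]) (use Ak in auto)
    moreover have "spec_mat (L * Ak) (Lb * Bk)"
      by (rule spec_mat_mult[OF sL s]) (use Ak L in auto)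
    ultimately have "0 \<cdot>\<^sub>m (Bk * Bk) = Lb * Bk" unfolding eq by (rule spec_mat_unique)
    moreover have "0 \<cdot>\<^sub>m (Bk * Bk) = 0\<^sub>m m m" using Bk by (auto intro!: eq_matI)
    ultimately have "Bk = 0\<^sub>m m m" using Lb[OF Bk] by simp
    with s obtain A' B' where s': "spec_mat A' B'" and e': "Ak = ?c \<cdot>\<^sub>m A'"
      using spec_mat_zero_div by blast
    have "A = ?c ^ Suc (Suc k) \<cdot>\<^sub>m A'" unfolding e e' by (simp add: smult_smult_mat mult.commute)
    with s' show ?case by blast
  qed
  show ?thesis
  proof (rule eq_matI)
    fix i j assume "i < dim_row (0\<^sub>m m m :: ratf mat)" and "j < dim_col (0\<^sub>m m m :: ratf mat)"
    hence i: "i < m" and j: "j < m" by auto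
    have "A $$ (i, j) = 0"
    proof (rule ratf_zero_if_all_div)
      fix k :: nat assume "k \<ge> 1"
      then obtain k' where k: "k = Suc k'" by (cases k) auto
      from claim[of k'] obtain Ak Bk where s: "spec_mat Ak Bk" and e: "A = ?c ^ Suc k' \<cdot>\<^sub>m Ak" by blast
      have Ak: "Ak \<in> carrier_mat m m" using A unfolding e carrier_mat_def by simp
      have "A $$ (i,j) = (?c ^ Suc k' \<cdot>\<^sub>m Ak) $$ (i,j)" by (simp only: e)
      also have "\<dots> = ?c ^ k * Ak $$ (i,j)" using i j Ak unfolding k by simp
      finally have "A $$ (i,j) = ?c ^ k * Ak $$ (i,j)" .
      moreover have "spec1 (Ak $$ (i,j)) (Bk $$ (i,j))" using s i j Ak unfolding spec_mat_def by auto
      ultimately show "\<exists>g c. spec1 g c \<and> A $$ (i, j) = (uu - 1) ^ k * g" by blast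
    qed
    thus "A $$ (i, j) = 0\<^sub>m m m $$ (i, j)" using i j by simp
  next
    show "dim_row A = dim_row (0\<^sub>m m m :: ratf mat)" using A by simp
    show "dim_col A = dim_col (0\<^sub>m m m :: ratf mat)" using A by simp
  qed
qed

lemma assoc_dim: assumes "dim_col A = dim_row B" "dim_col B = dim_row C"
  shows "(A :: 'a :: semiring_0 mat) * B * C = A * (B * C)"
proof -
  have 1: "A \<in> carrier_mat (dim_row A) (dim_col A)" by (rule carrier_matI) auto
  have 2: "B \<in> carrier_mat (dim_col A) (dim_col B)" by (rule carrier_matI) (auto simp: assms)
  have 3: "C \<in> carrier_mat (dim_col B) (dim_col C)" by (rule carrier_matI) (auto simp: assms)
  from 1 2 3 show ?thesis by (rule assoc_mult_mat)
qed

lemma distl_dim: assumes "dim_col A = dim_row B" "dim_row C = dim_row B" "dim_col C = dim_col B"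
  shows "(A :: 'a :: semiring_0 mat) * (B + C) = A * B + A * C"
proof -
  have 1: "A \<in> carrier_mat (dim_row A) (dim_col A)" by (rule carrier_matI) auto
  have 2: "B \<in> carrier_mat (dim_col A) (dim_col B)" by (rule carrier_matI) (auto simp: assms)
  have 3: "C \<in> carrier_mat (dim_col A) (dim_col B)" by (rule carrier_matI) (auto simp: assms)
  from 1 2 3 show ?thesis by (rule mult_add_distrib_mat)
qed

lemma distr_dim: assumes "dim_row B = dim_row A" "dim_col B = dim_col A" "dim_col A = dim_row C"
  shows "((A :: 'a :: semiring_0 mat) + B) * C = A * C + B * C"
proof -
  have 1: "A \<in> carrier_mat (dim_row A) (dim_col A)" by (rule carrier_matI) auto
  have 2: "B \<in> carrier_mat (dim_row A) (dim_col A)" by (rule carrier_matI) (auto simp: assms)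
  have 3: "C \<in> carrier_mat (dim_col A) (dim_col C)" by (rule carrier_matI) (auto simp: assms)
  from 1 2 3 show ?thesis by (rule add_mult_distrib_mat)
qed

lemmas mdims = assoc_dim distl_dim distr_dim

definition Ed :: "nat \<Rightarrow> nat \<Rightarrow> 'a::field mat \<Rightarrow> 'a mat \<Rightarrow> 'a mat" where
  "Ed d m A B = (inverse (of_nat d) :: 'a) \<cdot>\<^sub>m foldr (\<lambda>s M. A ^\<^sub>m s * B ^\<^sub>m (d - s) + M) [0..<d] (0\<^sub>m m m)"

lemma Eidem_Ed: "Eidem d m T i = Ed d m (T i) (T (Suc i))"
  by (simp add: Eidem_def Ed_def)

lemma foldr_carrier: "(\<And>s. f s \<in> carrier_mat m m) \<Longrightarrow> foldr (\<lambda>s M. f s + M) xs (0\<^sub>m m m) \<in> carrier_mat m m"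
  by (induct xs) auto

lemma Ed_carrier: "A \<in> carrier_mat m m \<Longrightarrow> B \<in> carrier_mat m m \<Longrightarrow> Ed d m A B \<in> carrier_mat m m"
  unfolding Ed_def by (rule smult_carrier_mat, rule foldr_carrier, rule mult_carrier_mat[of _ m m _ m]) auto

lemma pow_comm: assumes G: "G \<in> carrier_mat m m" and A: "A \<in> carrier_mat m m" and A': "A' \<in> carrier_mat m m"
  and c: "G * A = A' * G" shows "G * A ^\<^sub>m k = A' ^\<^sub>m k * G"
proof (induct k)
  case 0 show ?case using G A A' by simp
next
  case (Suc k)
  have "G * A ^\<^sub>m Suc k = (G * A ^\<^sub>m k) * A" using G A by (simp add: mdims)
  also have "\<dots> = A' ^\<^sub>m k * (G * A)" unfolding Suc using G A A' by (simp add: mdims)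
  also have "\<dots> = A' ^\<^sub>m Suc k * G" unfolding c using G A A' by (simp add: mdims)
  finally show ?case .
qed

lemma foldr_comm: assumes G: "G \<in> carrier_mat m m" and f: "\<And>s. f s \<in> carrier_mat m m" "\<And>s. f' s \<in> carrier_mat m m"
  and c: "\<And>s. G * f s = f' s * G"
  shows "G * foldr (\<lambda>s M. f s + M) xs (0\<^sub>m m m) = foldr (\<lambda>s M. f' s + M) xs (0\<^sub>m m m) * G"
proof (induct xs)
  case Nil show ?case using G by simp
next
  case (Cons x xs)
  have c1: "foldr (\<lambda>s M. f s + M) xs (0\<^sub>m m m) \<in> carrier_mat m m" "foldr (\<lambda>s M. f' s + M) xs (0\<^sub>m m m) \<in> carrier_mat m m"
    using f by (auto intro!: foldr_carrier)
  have "G * (f x + foldr (\<lambda>s M. f s + M) xs (0\<^sub>m m m)) = G * f x + G * foldr (\<lambda>s M. f s + M) xs (0\<^sub>m m m)"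
    by (rule mult_add_distrib_mat[OF G f(1) c1(1)])
  also have "\<dots> = f' x * G + foldr (\<lambda>s M. f' s + M) xs (0\<^sub>m m m) * G" using Cons c by simp
  also have "\<dots> = (f' x + foldr (\<lambda>s M. f' s + M) xs (0\<^sub>m m m)) * G"
    by (rule add_mult_distrib_mat[OF f(2) c1(2) G, symmetric])
  finally show ?case by simp
qed

lemma Ed_comm: assumes G: "G \<in> carrier_mat m m" and A: "A \<in> carrier_mat m m" and A': "A' \<in> carrier_mat m m"
  and B: "B \<in> carrier_mat m m" and B': "B' \<in> carrier_mat m m"
  and cA: "G * A = A' * G" and cB: "G * B = B' * G"
  shows "G * Ed d m A B = Ed d m A' B' * G"
proof -
  have fc: "G * (A ^\<^sub>m s * B ^\<^sub>m (d - s)) = (A' ^\<^sub>m s * B' ^\<^sub>m (d - s)) * G" for s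
  proof -
    have "G * (A ^\<^sub>m s * B ^\<^sub>m (d - s)) = (G * A ^\<^sub>m s) * B ^\<^sub>m (d - s)" using G A B by (simp add: mdims)
    also have "\<dots> = A' ^\<^sub>m s * (G * B ^\<^sub>m (d - s))" unfolding pow_comm[OF G A A' cA] using G A' B by (simp add: mdims)
    also have "\<dots> = (A' ^\<^sub>m s * B' ^\<^sub>m (d - s)) * G" unfolding pow_comm[OF G B B' cB] using G A' B' by (simp add: mdims)
    finally show ?thesis .
  qed
  have "G * foldr (\<lambda>s M. A ^\<^sub>m s * B ^\<^sub>m (d - s) + M) [0..<d] (0\<^sub>m m m)
     = foldr (\<lambda>s M. A' ^\<^sub>m s * B' ^\<^sub>m (d - s) + M) [0..<d] (0\<^sub>m m m) * G"
    by (rule foldr_comm[OF G _ _ fc]) (use A B A' B' in auto)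
  moreover have "foldr (\<lambda>s M. A ^\<^sub>m s * B ^\<^sub>m (d - s) + M) [0..<d] (0\<^sub>m m m) \<in> carrier_mat m m"
     "foldr (\<lambda>s M. A' ^\<^sub>m s * B' ^\<^sub>m (d - s) + M) [0..<d] (0\<^sub>m m m) \<in> carrier_mat m m"
    using A B A' B' by (auto intro!: foldr_carrier)
  ultimately show ?thesis unfolding Ed_def using G by (simp add: mult_smult_distrib mult_smult_assoc_mat)
qed

section \<open>Conjugation and specialisation\<close>

definition cj :: "'a::field mat \<Rightarrow> 'a mat \<Rightarrow> 'a mat \<Rightarrow> 'a mat" where
  "cj Q P M = Q * M * P"

lemma cj_mult: assumes P: "P \<in> carrier_mat m m" and Q: "Q \<in> carrier_mat m m" and PQ: "P * Q = 1\<^sub>m m"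
  and A: "A \<in> carrier_mat m m" and B: "B \<in> carrier_mat m m"
  shows "cj Q P (A * B) = cj Q P A * cj Q P B"
proof -
  have "cj Q P A * cj Q P B = Q * A * (P * Q) * B * P" unfolding cj_def using P Q A B
    by (simp add: mdims carrier_matD)
  also have "\<dots> = cj Q P (A * B)" unfolding PQ cj_def using P Q A B by (simp add: mdims carrier_matD)
  finally show ?thesis by simp
qed

lemma cj_add: assumes P: "P \<in> carrier_mat m m" and Q: "Q \<in> carrier_mat m m"
  and A: "A \<in> carrier_mat m m" and B: "B \<in> carrier_mat m m"
  shows "cj Q P (A + B) = cj Q P A + cj Q P B"
  unfolding cj_def using P Q A B by (simp add: mdims carrier_matD)

lemma cj_smult: assumes P: "P \<in> carrier_mat m m" and Q: "Q \<in> carrier_mat m m"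
  and A: "A \<in> carrier_mat m m"
  shows "cj Q P (c \<cdot>\<^sub>m A) = c \<cdot>\<^sub>m cj Q P A"
  unfolding cj_def using P Q A by (simp add: mult_smult_distrib mult_smult_assoc_mat[of _ m m _ m])

lemma cj_one: assumes P: "P \<in> carrier_mat m m" and Q: "Q \<in> carrier_mat m m" and PQ: "P * Q = 1\<^sub>m m"
  shows "cj Q P (1\<^sub>m m) = 1\<^sub>m m"
  unfolding cj_def using P Q mat_mult_left_right_inverse[OF P Q PQ] by simp

lemma cj_zero: assumes P: "P \<in> carrier_mat m m" and Q: "Q \<in> carrier_mat m m"
  shows "cj Q P (0\<^sub>m m m) = 0\<^sub>m m m"
  unfolding cj_def using P Q by simp

lemma cj_carrier: "P \<in> carrier_mat m m \<Longrightarrow> Q \<in> carrier_mat m m \<Longrightarrow> A \<in> carrier_mat m m \<Longrightarrow> cj Q P A \<in> carrier_mat m m"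
  unfolding cj_def by simp

lemma spec_mat_carrier: "spec_mat A B \<Longrightarrow> A \<in> carrier_mat m n \<Longrightarrow> B \<in> carrier_mat m n"
  unfolding spec_mat_def carrier_mat_def by auto

lemma spec_pow: assumes "spec_mat A Ab" "A \<in> carrier_mat m m"
  shows "spec_mat (A ^\<^sub>m k) (Ab ^\<^sub>m k)"
proof (induct k)
  case 0
  have "dim_row Ab = m" using spec_mat_carrier[OF assms] by auto
  then show ?case using assms spec_mat_one by auto
next
  case (Suc k)
  then show ?case using assms by (auto intro!: spec_mat_mult)
qed

lemma spec_foldr: assumes "\<And>s. spec_mat (f s) (g s)" "\<And>s. f s \<in> carrier_mat m m"
  shows "spec_mat (foldr (\<lambda>s M. f s + M) xs (0\<^sub>m m m)) (foldr (\<lambda>s M. g s + M) xs (0\<^sub>m m m))"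
proof (induct xs)
  case Nil show ?case by (simp add: spec_mat_zero)
next
  case (Cons x xs)
  have "foldr (\<lambda>s M. f s + M) xs (0\<^sub>m m m) \<in> carrier_mat m m" using assms(2) by (rule foldr_carrier)
  moreover have "f x \<in> carrier_mat m m" by (rule assms(2))
  ultimately show ?case using Cons assms(1)[of x] by (auto intro!: spec_mat_add)
qed

lemma cj_pow: assumes P: "P \<in> carrier_mat m m" and Q: "Q \<in> carrier_mat m m" and PQ: "P * Q = 1\<^sub>m m"
  and A: "A \<in> carrier_mat m m"
  shows "cj Q P (A ^\<^sub>m k) = cj Q P A ^\<^sub>m k"
proof (induct k)
  case 0 show ?case using cj_one[OF P Q PQ] A P Q by (simp add: cj_def)
next
  case (Suc k)
  show ?case using Suc cj_mult[OF P Q PQ pow_carrier_mat[OF A] A] by simp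
qed

lemma cj_foldr: assumes P: "P \<in> carrier_mat m m" and Q: "Q \<in> carrier_mat m m"
  and f: "\<And>s. f s \<in> carrier_mat m m"
  shows "cj Q P (foldr (\<lambda>s M. f s + M) xs (0\<^sub>m m m)) = foldr (\<lambda>s M. cj Q P (f s) + M) xs (0\<^sub>m m m)"
proof (induct xs)
  case Nil show ?case using cj_zero[OF P Q] by simp
next
  case (Cons x xs)
  show ?case using Cons cj_add[OF P Q f[of x] foldr_carrier[where f=f and xs=xs, OF f]] by simp
qed

lemma spec_cj_Ed: assumes P: "P \<in> carrier_mat m m" and Q: "Q \<in> carrier_mat m m" and PQ: "P * Q = 1\<^sub>m m"
  and A: "A \<in> carrier_mat m m" and B: "B \<in> carrier_mat m m" and d: "d > 0"
  and sA: "spec_mat (cj Q P A) Ab" and sB: "spec_mat (cj Q P B) Bb"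
  shows "spec_mat (cj Q P (Ed d m A B)) (Ed d m Ab Bb)"
proof -
  have cA: "cj Q P A \<in> carrier_mat m m" "cj Q P B \<in> carrier_mat m m" using P Q A B by (auto intro: cj_carrier)
  have e: "cj Q P (Ed d m A B) = inverse (of_nat d) \<cdot>\<^sub>m
     foldr (\<lambda>s M. cj Q P A ^\<^sub>m s * cj Q P B ^\<^sub>m (d - s) + M) [0..<d] (0\<^sub>m m m)"
  proof -
    have fc: "A ^\<^sub>m s * B ^\<^sub>m (d - s) \<in> carrier_mat m m" for s using A B by (rule_tac mult_carrier_mat[of _ m m _ m]) auto
    have "cj Q P (Ed d m A B) = inverse (of_nat d) \<cdot>\<^sub>m
       cj Q P (foldr (\<lambda>s M. A ^\<^sub>m s * B ^\<^sub>m (d - s) + M) [0..<d] (0\<^sub>m m m))"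
      unfolding Ed_def by (rule cj_smult[OF P Q foldr_carrier[OF fc]])
    also have "\<dots> = inverse (of_nat d) \<cdot>\<^sub>m
       foldr (\<lambda>s M. cj Q P (A ^\<^sub>m s * B ^\<^sub>m (d - s)) + M) [0..<d] (0\<^sub>m m m)"
      by (subst cj_foldr[OF P Q fc]) (rule refl)
    also have "(\<lambda>s. cj Q P (A ^\<^sub>m s * B ^\<^sub>m (d - s))) = (\<lambda>s. cj Q P A ^\<^sub>m s * cj Q P B ^\<^sub>m (d - s))"
      by (rule ext) (simp add: cj_mult[OF P Q PQ] cj_pow[OF P Q PQ] A B)
    finally show ?thesis .
  qed
  show ?thesis unfolding e
    by (unfold Ed_def, rule spec_mat_smult[OF spec1_inv_nat[OF d]], rule spec_foldr)
      (use cA sA sB in \<open>auto intro!: spec_mat_mult spec_pow\<close>)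
qed

lemma s3_alg:
  fixes g1 g2 :: "'a::comm_ring_1 mat"
  assumes cr[simp]: "g1 \<in> carrier_mat n n" "g2 \<in> carrier_mat n n"
  and q1: "g1 * g1 = 1\<^sub>m n" and q2: "g2 * g2 = 1\<^sub>m n" and br: "g1 * g2 * g1 = g2 * g1 * g2"
  defines "X \<equiv> g1 * g2 * g1 + g1 * g2 + g2 * g1 + g1 + g2 + 1\<^sub>m n"
  shows "g1 * X = X" "g2 * X = X" "X * g1 = X" "X * g2 = X"
proof -
  have cm[simp]: "A * B \<in> carrier_mat n n" "A + B \<in> carrier_mat n n"
    if "A \<in> carrier_mat n n" "B \<in> carrier_mat n n" for A B :: "'a mat" using that by auto
  have ms: "A * B * C = A * (B * C)" "A * (B + C) = A * B + A * C" "(A + B) * C = A * C + B * C"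
     "A + B + C = A + (B + C)" "A + (B + C) = B + (A + C)"
    if "A \<in> carrier_mat n n" "B \<in> carrier_mat n n" "C \<in> carrier_mat n n" for A B C :: "'a mat"
    using that by (auto simp: mult_add_distrib_mat add_mult_distrib_mat lcomm_add_mat)
  have ms2: "A + B = B + A" if "A \<in> carrier_mat n n" "B \<in> carrier_mat n n" for A B :: "'a mat"
    using that by (auto simp: comm_add_mat)
  have ms1: "1\<^sub>m n * A = A" "A * 1\<^sub>m n = A" if "A \<in> carrier_mat n n" for A :: "'a mat"
    using that by auto
  have r1: "g1 * (g1 * Z) = Z" "g2 * (g2 * Z) = Z" "g2 * (g1 * (g2 * Z)) = g1 * (g2 * (g1 * Z))"
    if "Z \<in> carrier_mat n n" for Z
  proof -
    have "g1 * (g1 * Z) = (g1 * g1) * Z" using that by (simp add: ms)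
    thus "g1 * (g1 * Z) = Z" using that q1 by (simp add: ms1)
    have "g2 * (g2 * Z) = (g2 * g2) * Z" using that by (simp add: ms)
    thus "g2 * (g2 * Z) = Z" using that q2 by (simp add: ms1)
    have "g2 * (g1 * (g2 * Z)) = (g2 * g1 * g2) * Z" using that by (simp add: ms)
    also have "\<dots> = (g1 * g2 * g1) * Z" using br by simp
    finally show "g2 * (g1 * (g2 * Z)) = g1 * (g2 * (g1 * Z))" using that by (simp add: ms)
  qed
  have br': "g2 * (g1 * g2) = g1 * (g2 * g1)" using br by (simp add: ms)
  note rs = ms ms1 ms2 r1 q1 q2 br'
  show "g1 * X = X" unfolding X_def by (simp add: rs)
  show "g2 * X = X" unfolding X_def by (simp add: rs)
  show "X * g1 = X" unfolding X_def by (simp add: rs)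
  show "X * g2 = X" unfolding X_def by (simp add: rs)
qed

lemma mult_unit_vec_index: assumes "(A :: 'a :: comm_ring_1 mat) \<in> carrier_mat m m" "i < m" "j < m"
  shows "(A *\<^sub>v unit_vec m j) $ i = A $$ (i, j)"
proof -
  have "(A *\<^sub>v unit_vec m j) $ i = (\<Sum>k\<in>{0..<m}. A $$ (i, k) * (if k = j then 1 else 0))"
    using assms by (simp add: scalar_prod_def unit_vec_def)
  also have "\<dots> = (\<Sum>k\<in>{0..<m}. if k = j then A $$ (i, k) else 0)"
    by (rule sum.cong) auto
  also have "\<dots> = A $$ (i, j)" using assms(3) by (simp add: sum.delta)
  finally show ?thesis .
qed

lemma triv_part:
  fixes Gb Tb :: "nat \<Rightarrow> complex mat"
  assumes n: "n \<ge> 3" and iso: "iso_to_E d n lam m Gb Tb"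
    and cr: "Gb 1 \<in> carrier_mat m m" "Gb 2 \<in> carrier_mat m m"
    and q1: "Gb 1 * Gb 1 = 1\<^sub>m m" and q2: "Gb 2 * Gb 2 = 1\<^sub>m m"
    and br: "Gb 1 * Gb 2 * Gb 1 = Gb 2 * Gb 1 * Gb 2"
  shows "(Gb 1 * Gb 2 * Gb 1 + Gb 1 * Gb 2 + Gb 2 * Gb 1 + Gb 1 + Gb 2 + 1\<^sub>m m = 0\<^sub>m m m)
     \<longleftrightarrow> \<not> triv_summand d n lam"
proof -
  define g1 where "g1 = Gb 1"
  define g2 where "g2 = Gb 2"
  define Xb where "Xb = g1 * g2 * g1 + g1 * g2 + g2 * g1 + g1 + g2 + 1\<^sub>m m"
  have c[simp]: "g1 \<in> carrier_mat m m" "g2 \<in> carrier_mat m m" using cr unfolding g1_def g2_def by auto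
  have cX[simp]: "Xb \<in> carrier_mat m m" unfolding Xb_def by auto
  have alg: "g1 * Xb = Xb" "g2 * Xb = Xb" "Xb * g1 = Xb" "Xb * g2 = Xb"
  proof -
    have "g1 * g1 = 1\<^sub>m m" "g2 * g2 = 1\<^sub>m m" "g1 * g2 * g1 = g2 * g1 * g2" using q1 q2 br unfolding g1_def g2_def by auto
    note s3 = s3_alg[OF c(1) c(2) this]
    show "g1 * Xb = Xb" "g2 * Xb = Xb" "Xb * g1 = Xb" "Xb * g2 = Xb" unfolding Xb_def by (fact s3)+
  qed
  from iso obtain \<phi> where bij: "bij_betw \<phi> (carrier_vec m) (Emod d n lam)"
    and add: "\<forall>v\<in>carrier_vec m. \<forall>w\<in>carrier_vec m. \<phi> (v + w) = (\<lambda>x. \<phi> v x + \<phi> w x)"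
    and sm: "\<forall>c. \<forall>v\<in>carrier_vec m. \<phi> (c \<cdot>\<^sub>v v) = (\<lambda>x. c * \<phi> v x)"
    and gG: "\<forall>i\<in>{1..<n}. \<forall>v\<in>carrier_vec m. \<phi> (Gb i *\<^sub>v v) = gact d n (gS i) (\<phi> v)"
    unfolding iso_to_E_def by blast
  have inj: "inj_on \<phi> (carrier_vec m)" and img: "\<phi> ` carrier_vec m = Emod d n lam"
    using bij by (auto simp: bij_betw_def)
  have g1a: "\<phi> (g1 *\<^sub>v v) = gact d n (gS 1) (\<phi> v)" if "v \<in> carrier_vec m" for v
    using gG that n unfolding g1_def by auto
  have g2a: "\<phi> (g2 *\<^sub>v v) = gact d n (gS 2) (\<phi> v)" if "v \<in> carrier_vec m" for v
    using gG that n unfolding g2_def by auto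
  have phi0: "\<phi> (0\<^sub>v m) = (\<lambda>_. 0)"
  proof -
    have "\<phi> (0 \<cdot>\<^sub>v 0\<^sub>v m) = (\<lambda>x. 0 * \<phi> (0\<^sub>v m) x)" using sm by auto
    moreover have "0 \<cdot>\<^sub>v 0\<^sub>v m = (0\<^sub>v m :: complex vec)" by auto
    ultimately show ?thesis by simp
  qed
  have cm[simp]: "A * B \<in> carrier_mat m m" "A + B \<in> carrier_mat m m"
    if "A \<in> carrier_mat m m" "B \<in> carrier_mat m m" for A B :: "complex mat" using that by auto
  have mvc[simp]: "A *\<^sub>v y \<in> carrier_vec m" if "A \<in> carrier_mat m m" "y \<in> carrier_vec m" for A :: "complex mat" and y
    using that by auto
  have mv: "(A + B) *\<^sub>v y = A *\<^sub>v y + B *\<^sub>v y" "(A * B) *\<^sub>v y = A *\<^sub>v (B *\<^sub>v y)"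
    if "A \<in> carrier_mat m m" "B \<in> carrier_mat m m" "y \<in> carrier_vec m" for A B :: "complex mat" and y
    using that by (auto simp: add_mult_distrib_mat_vec)
  have X6: "(Xb *\<^sub>v y) $ i = 6 * y $ i" if y: "y \<in> carrier_vec m" and f1: "g1 *\<^sub>v y = y" and f2: "g2 *\<^sub>v y = y"
    and i: "i < m" for y i
  proof -
    have "Xb *\<^sub>v y = y + y + y + y + y + y" unfolding Xb_def using y f1 f2 by (simp add: mv)
    thus ?thesis using y i by simp
  qed
  show ?thesis unfolding Xb_def[symmetric] g1_def[symmetric] g2_def[symmetric]
  proof
    assume X0: "Xb = 0\<^sub>m m m"
    show "\<not> triv_summand d n lam"
    proof
      assume "triv_summand d n lam"
      then obtain v where v: "v \<in> Emod d n lam" "v \<noteq> (\<lambda>_. 0)" "gact d n (gS 1) v = v" "gact d n (gS 2) v = v"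
        unfolding triv_summand_def apply - apply (erule exE)+ apply (erule conjE)+ apply (rule that) apply assumption+ done
      from v(1) img obtain y where y: "y \<in> carrier_vec m" and vy: "v = \<phi> y" by auto
      have "\<phi> (g1 *\<^sub>v y) = \<phi> y" using g1a[OF y] v(3) vy by simp
      hence f1: "g1 *\<^sub>v y = y" by (rule inj_onD[OF inj]) (use y in simp_all)
      have "\<phi> (g2 *\<^sub>v y) = \<phi> y" using g2a[OF y] v(4) vy by simp
      hence f2: "g2 *\<^sub>v y = y" by (rule inj_onD[OF inj]) (use y in simp_all)
      have "y = 0\<^sub>v m"
      proof (rule eq_vecI)
        fix i assume "i < dim_vec (0\<^sub>v m :: complex vec)"
        hence i: "i < m" by simp
        have "(Xb *\<^sub>v y) $ i = 0" using X0 i y by simp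
        thus "y $ i = 0\<^sub>v m $ i" using X6[OF y f1 f2 i] i by simp
      qed (use y in auto)
      hence "v = (\<lambda>_. 0)" using vy phi0 by simp
      with v(2) show False by simp
    qed
  next
    assume nt: "\<not> triv_summand d n lam"
    show "Xb = 0\<^sub>m m m"
    proof (rule ccontr)
      assume Xnz: "Xb \<noteq> 0\<^sub>m m m"
      have "\<exists>i j. i < m \<and> j < m \<and> Xb $$ (i, j) \<noteq> 0"
      proof (rule ccontr)
        assume "\<not> (\<exists>i j. i < m \<and> j < m \<and> Xb $$ (i, j) \<noteq> 0)"
        hence "Xb = 0\<^sub>m m m" using carrier_matD[OF cX] by (intro eq_matI) auto
        with Xnz show False by simp
      qed
      then obtain i j where i: "i < m" and j: "j < m" and nz: "Xb $$ (i, j) \<noteq> 0" by blast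
      define y where "y = Xb *\<^sub>v unit_vec m j"
      have y: "y \<in> carrier_vec m" unfolding y_def using cX by simp
      have yi: "y $ i = Xb $$ (i, j)" unfolding y_def by (rule mult_unit_vec_index[OF cX i j])
      have f1: "g1 *\<^sub>v y = y" unfolding y_def using alg(1) by (simp add: mv(2)[symmetric])
      have f2: "g2 *\<^sub>v y = y" unfolding y_def using alg(2) by (simp add: mv(2)[symmetric])
      define l where "l = (\<lambda>x. (Xb *\<^sub>v x) $ i)"
      have l1: "l (g1 *\<^sub>v x) = l x" if "x \<in> carrier_vec m" for x
        unfolding l_def using that alg(3) by (simp add: mv(2)[symmetric])
      have l2: "l (g2 *\<^sub>v x) = l x" if "x \<in> carrier_vec m" for x
        unfolding l_def using that alg(4) by (simp add: mv(2)[symmetric])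
      have ladd: "l (x + z) = l x + l z" if "x \<in> carrier_vec m" "z \<in> carrier_vec m" for x z
        unfolding l_def using that i carrier_matD[OF cX] by (simp add: mult_add_distrib_mat_vec[OF cX])
      have lsm: "l (c \<cdot>\<^sub>v x) = c * l x" if "x \<in> carrier_vec m" for x c
        unfolding l_def using that i carrier_matD[OF cX] by (simp add: mult_mat_vec[OF cX])
      have l0: "l (0\<^sub>v m) = 0"
      proof -
        have "l (0 \<cdot>\<^sub>v 0\<^sub>v m) = 0 * l (0\<^sub>v m)" by (rule lsm) simp
        moreover have "0 \<cdot>\<^sub>v 0\<^sub>v m = (0\<^sub>v m :: complex vec)" by auto
        ultimately show ?thesis by simp
      qed
      define c0 where "c0 = l y"
      have c0: "c0 \<noteq> 0" unfolding c0_def l_def using X6[OF y f1 f2 i] yi nz by simp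
      define W where "W = \<phi> ` {x \<in> carrier_vec m. l x = 0}"
      have "triv_summand d n lam"
        unfolding triv_summand_def
      proof (intro exI conjI ballI allI)
        show "\<phi> y \<in> Emod d n lam" using img y by auto
        show "\<phi> y \<noteq> (\<lambda>_. 0)"
        proof
          assume "\<phi> y = (\<lambda>_. 0)"
          hence "\<phi> y = \<phi> (0\<^sub>v m)" using phi0 by simp
          hence "y = 0\<^sub>v m" by (rule inj_onD[OF inj]) (use y in simp_all)
          hence "y $ i = 0" using i by simp
          with yi nz show False by simp
        qed
        show "gact d n (gS 1) (\<phi> y) = \<phi> y" using g1a[OF y] f1 by simp
        show "gact d n (gS 2) (\<phi> y) = \<phi> y" using g2a[OF y] f2 by simp
        show "W \<subseteq> Emod d n lam" unfolding W_def using img by auto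
        show "(\<lambda>_. 0) \<in> W" unfolding W_def using phi0 l0 by (auto intro!: image_eqI[of _ _ "0\<^sub>v m"])
        fix w1 w2 assume "w1 \<in> W" "w2 \<in> W"
        then obtain x1 x2 where x: "x1 \<in> carrier_vec m" "l x1 = 0" "w1 = \<phi> x1" "x2 \<in> carrier_vec m" "l x2 = 0" "w2 = \<phi> x2"
          unfolding W_def by auto
        show "(\<lambda>x. w1 x + w2 x) \<in> W" unfolding W_def
          using x add ladd by (auto intro!: image_eqI[of _ _ "x1 + x2"])
      next
        fix c :: complex and w assume "w \<in> W"
        then obtain x where x: "x \<in> carrier_vec m" "l x = 0" "w = \<phi> x" unfolding W_def by auto
        show "(\<lambda>xa. c * w xa) \<in> W" unfolding W_def
          using x sm lsm by (auto intro!: image_eqI[of _ _ "c \<cdot>\<^sub>v x"])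
      next
        fix w assume "w \<in> W"
        then obtain x where x: "x \<in> carrier_vec m" "l x = 0" "w = \<phi> x" unfolding W_def by auto
        show "gact d n (gS 1) w \<in> W" unfolding W_def
          using x g1a l1 by (auto intro!: image_eqI[of _ _ "g1 *\<^sub>v x"])
        show "gact d n (gS 2) w \<in> W" unfolding W_def
          using x g2a l2 by (auto intro!: image_eqI[of _ _ "g2 *\<^sub>v x"])
      next
        fix e assume "e \<in> Emod d n lam"
        then obtain x where x: "x \<in> carrier_vec m" and ex: "e = \<phi> x" using img by auto
        define c where "c = l x / c0"
        define z where "z = x + (- c) \<cdot>\<^sub>v y"
        have z: "z \<in> carrier_vec m" unfolding z_def using x y by simp
        have lz: "l z = 0" unfolding z_def using x y c0 by (simp add: ladd lsm c_def c0_def[symmetric])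
        have xz: "x = c \<cdot>\<^sub>v y + z" unfolding z_def using x y by (auto intro!: eq_vecI)
        have dec: "\<phi> x = (\<lambda>g. c * \<phi> y g + \<phi> z g)" unfolding xz using add sm y z by simp
        show "\<exists>!(c, w). w \<in> W \<and> e = (\<lambda>g. c * \<phi> y g + w g)"
        proof (rule ex1I[of _ "(c, \<phi> z)"])
          show "case (c, \<phi> z) of (c, w) \<Rightarrow> w \<in> W \<and> e = (\<lambda>g. c * \<phi> y g + w g)"
            using z lz dec ex unfolding W_def by auto
        next
          fix p assume "case p of (c', w) \<Rightarrow> w \<in> W \<and> e = (\<lambda>g. c' * \<phi> y g + w g)"
          then obtain c' w where p: "p = (c', w)" and w: "w \<in> W" and e': "e = (\<lambda>g. c' * \<phi> y g + w g)"
            by (cases p) auto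
          from w obtain z' where z': "z' \<in> carrier_vec m" "l z' = 0" "w = \<phi> z'" unfolding W_def by auto
          have "\<phi> (c' \<cdot>\<^sub>v y + z') = \<phi> (c \<cdot>\<^sub>v y + z)"
            using add sm y z z' e' ex dec by simp
          hence eqv: "c' \<cdot>\<^sub>v y + z' = c \<cdot>\<^sub>v y + z" by (rule inj_onD[OF inj]) (use y z z' in simp_all)
          hence "l (c' \<cdot>\<^sub>v y + z') = l (c \<cdot>\<^sub>v y + z)" by simp
          hence "c' * c0 = c * c0" using y z z' lz by (simp add: ladd lsm c0_def)
          hence cc: "c' = c" using c0 by simp
          have "z' = z"
          proof (rule eq_vecI)
            fix k assume "k < dim_vec z" hence k: "k < m" using z by simp
            have "(c' \<cdot>\<^sub>v y + z') $ k = (c \<cdot>\<^sub>v y + z) $ k" using eqv by simp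
            thus "z' $ k = z $ k" using k y z z' cc by simp
          qed (use z z' in simp)
          thus "p = (c, \<phi> z)" using p cc z' by simp
        qed
      qed
      with nt show False by simp
    qed
  qed
qed

lemma spec_cj_mult: assumes P: "P \<in> carrier_mat m m" and Q: "Q \<in> carrier_mat m m" and PQ: "P * Q = 1\<^sub>m m"
  and A: "A \<in> carrier_mat m m" and B: "B \<in> carrier_mat m m"
  and sA: "spec_mat (cj Q P A) Ab" and sB: "spec_mat (cj Q P B) Bb"
  shows "spec_mat (cj Q P (A * B)) (Ab * Bb)"
  unfolding cj_mult[OF P Q PQ A B]
  by (rule spec_mat_mult[OF sA sB]) (use cj_carrier[OF P Q A] cj_carrier[OF P Q B] in auto)

lemma spec_cj_add: assumes P: "P \<in> carrier_mat m m" and Q: "Q \<in> carrier_mat m m"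
  and A: "A \<in> carrier_mat m m" and B: "B \<in> carrier_mat m m"
  and sA: "spec_mat (cj Q P A) Ab" and sB: "spec_mat (cj Q P B) Bb"
  shows "spec_mat (cj Q P (A + B)) (Ab + Bb)"
  unfolding cj_add[OF P Q A B]
  by (rule spec_mat_add[OF sA sB]) (use cj_carrier[OF P Q A] cj_carrier[OF P Q B] in auto)

lemma spec_cj_smult: assumes P: "P \<in> carrier_mat m m" and Q: "Q \<in> carrier_mat m m"
  and A: "A \<in> carrier_mat m m" and sA: "spec_mat (cj Q P A) Ab" and c: "spec1 c c'"
  shows "spec_mat (cj Q P (c \<cdot>\<^sub>m A)) (c' \<cdot>\<^sub>m Ab)"
  unfolding cj_smult[OF P Q A] by (rule spec_mat_smult[OF c sA])

lemma spec_cj_one: assumes P: "P \<in> carrier_mat m m" and Q: "Q \<in> carrier_mat m m" and PQ: "P * Q = 1\<^sub>m m"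
  shows "spec_mat (cj Q P (1\<^sub>m m)) (1\<^sub>m m)"
  unfolding cj_one[OF P Q PQ] by (rule spec_mat_one)

theorem mainTheorem7:
  fixes d n m :: nat and lam :: "nat \<Rightarrow> nat list" and G T :: "nat \<Rightarrow> ratf mat"
  assumes "d \<ge> 1" and "n \<ge> 3" and "lam \<in> dpartitions d n"
    and "is_rho d n lam m G T"
  shows "Xelt m G = 0\<^sub>m m m \<longleftrightarrow> \<not> triv_summand d n lam"
proof -
  have d: "d > 0" and n: "n \<ge> 3" using assms by auto
  have cm[simp]: "A * B \<in> carrier_mat m m" "A + B \<in> carrier_mat m m"
    if "A \<in> carrier_mat m m" "B \<in> carrier_mat m m" for A B :: "'a :: semiring_0 mat" using that by auto
  from assms(4) have yrep: "is_Yrep d n uu m G T" unfolding is_rho_def by blast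
  from assms(4) obtain P Q Gb Tb where P: "P \<in> carrier_mat m m" and Q: "Q \<in> carrier_mat m m"
    and PQ: "P * Q = 1\<^sub>m m" and sG: "\<forall>i\<in>{1..<n}. spec_mat (Q * G i * P) (Gb i)"
    and sT: "\<forall>j\<in>{1..n}. spec_mat (Q * T j * P) (Tb j)" and iso: "iso_to_E d n lam m Gb Tb"
    unfolding is_rho_def by blast
  have i12: "(1::nat) \<in> {1..<n}" "(2::nat) \<in> {1..<n}" and j123: "(1::nat) \<in> {1..n}" "(2::nat) \<in> {1..n}" "(3::nat) \<in> {1..n}"
    and b1: "(1::nat) \<in> {1..n-2}" using n by auto
  from yrep have GC: "\<forall>i\<in>{1..<n}. G i \<in> carrier_mat m m" and TC: "\<forall>j\<in>{1..n}. T j \<in> carrier_mat m m"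
    and brA: "\<forall>i\<in>{1..n-2}. G i * G (Suc i) * G i = G (Suc i) * G i * G (Suc i)"
    and tg: "\<forall>i\<in>{1..<n}. \<forall>j\<in>{1..n}. T j * G i = G i * T (swp i j)"
    and qq: "\<forall>i\<in>{1..<n}. G i * G i = 1\<^sub>m m + (uu - 1) \<cdot>\<^sub>m Eidem d m T i + (uu - 1) \<cdot>\<^sub>m (Eidem d m T i * G i)"
    unfolding is_Yrep_def by blast+
  have G1[simp]: "G 1 \<in> carrier_mat m m" and G2[simp]: "G 2 \<in> carrier_mat m m" using GC i12 by auto
  have T1[simp]: "T 1 \<in> carrier_mat m m" and T2[simp]: "T 2 \<in> carrier_mat m m" and T3[simp]: "T 3 \<in> carrier_mat m m"
    using TC j123 by auto
  have "G 1 * G (Suc 1) * G 1 = G (Suc 1) * G 1 * G (Suc 1)" using brA b1 by blast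
  hence br: "G 1 * G 2 * G 1 = G 2 * G 1 * G 2" by (simp only: Suc_1)
  have T1s[simp]: "T (Suc 0) \<in> carrier_mat m m" and G1s[simp]: "G (Suc 0) \<in> carrier_mat m m" using T1 G1 by simp_all
  have t1g2: "T 1 * G 2 = G 2 * T 1" using tg i12 j123 by (auto simp: swp_def numeral_2_eq_2 numeral_3_eq_3)
  have t3g2: "T 3 * G 2 = G 2 * T 2" using tg i12 j123 by (auto simp: swp_def numeral_2_eq_2 numeral_3_eq_3)
  have t1g1: "T 1 * G 1 = G 1 * T 2" using tg i12 j123 by (auto simp: swp_def numeral_2_eq_2 numeral_3_eq_3)
  have t2g1: "T 2 * G 1 = G 1 * T 1" using tg i12 j123 by (auto simp: swp_def numeral_2_eq_2 numeral_3_eq_3)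
  have t3g1: "T 3 * G 1 = G 1 * T 3" using tg i12 j123 by (auto simp: swp_def numeral_2_eq_2 numeral_3_eq_3)
  define E1 where "E1 = Ed d m (T 1) (T 2)"
  define E2 where "E2 = Ed d m (T 2) (T 3)"
  define E3 where "E3 = Ed d m (T 1) (T 3)"
  have E1[simp]: "E1 \<in> carrier_mat m m" and E2[simp]: "E2 \<in> carrier_mat m m" and E3[simp]: "E3 \<in> carrier_mat m m"
    unfolding E1_def E2_def E3_def by (rule Ed_carrier[OF T1 T2], rule Ed_carrier[OF T2 T3], rule Ed_carrier[OF T1 T3])
  have eid1: "Eidem d m T 1 = E1" unfolding E1_def Eidem_Ed Suc_1 ..
  have eid2: "Eidem d m T 2 = E2" unfolding E2_def Eidem_Ed by (simp add: numeral_3_eq_3)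
  have c1: "G 2 * E1 = E3 * G 2" unfolding E1_def E3_def
    by (rule Ed_comm) (use t1g2 t3g2 in auto)
  have c2: "G 1 * E2 = E3 * G 1" unfolding E2_def E3_def
    by (rule Ed_comm) (use t1g1 t3g1 in auto)
  have c3: "G 1 * E3 = E2 * G 1" unfolding E2_def E3_def
    by (rule Ed_comm) (use t2g1 t3g1 in auto)
  define k1 where "k1 = (uu - 1) \<cdot>\<^sub>m E1"
  define k2 where "k2 = (uu - 1) \<cdot>\<^sub>m E2"
  define k3 where "k3 = (uu - 1) \<cdot>\<^sub>m E3"
  have k1[simp]: "k1 \<in> carrier_mat m m" and k2[simp]: "k2 \<in> carrier_mat m m" and k3[simp]: "k3 \<in> carrier_mat m m"
    unfolding k1_def k2_def k3_def by auto
  have "G 1 * G 1 = 1\<^sub>m m + (uu - 1) \<cdot>\<^sub>m Eidem d m T 1 + (uu - 1) \<cdot>\<^sub>m (Eidem d m T 1 * G 1)"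
    using qq i12(1) by blast
  hence kq1: "G 1 * G 1 = 1\<^sub>m m + k1 + k1 * G 1"
    unfolding k1_def eid1 by (simp only: mult_smult_assoc_mat[OF E1 G1])
  have "G 2 * G 2 = 1\<^sub>m m + (uu - 1) \<cdot>\<^sub>m Eidem d m T 2 + (uu - 1) \<cdot>\<^sub>m (Eidem d m T 2 * G 2)"
    using qq i12(2) by blast
  hence kq2: "G 2 * G 2 = 1\<^sub>m m + k2 + k2 * G 2"
    unfolding k2_def eid2 by (simp only: mult_smult_assoc_mat[OF E2 G2])
  have kc1: "G 2 * k1 = k3 * G 2" unfolding k1_def k3_def
    by (simp only: mult_smult_distrib[OF G2 E1] mult_smult_assoc_mat[OF E3 G2] c1)
  have kc2: "G 1 * k2 = k3 * G 1" unfolding k2_def k3_def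
    by (simp only: mult_smult_distrib[OF G1 E2] mult_smult_assoc_mat[OF E3 G1] c2)
  have kc3: "G 1 * k3 = k2 * G 1" unfolding k2_def k3_def
    by (simp only: mult_smult_distrib[OF G1 E3] mult_smult_assoc_mat[OF E2 G1] c3)
  define X where "X = Xelt m G"
  define L where "L = 1\<^sub>m m + (1\<^sub>m m + k2) + (1\<^sub>m m + k3) * (1\<^sub>m m + k2) + (1\<^sub>m m + k1) + (1\<^sub>m m + k3) * (1\<^sub>m m + k1)
        + (1\<^sub>m m + k2) * (1\<^sub>m m + k3) * (1\<^sub>m m + k1)"
  have XX: "X * X = L * X" unfolding X_def L_def Xelt_def
    by (rule key_alg[OF G1 G2 k1 k2 k3 kq1 kq2 br kc1 kc2 kc3])
  have XC[simp]: "X \<in> carrier_mat m m" and LC[simp]: "L \<in> carrier_mat m m" unfolding X_def Xelt_def L_def by auto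
  note sc = spec_cj_mult[OF P Q PQ] spec_cj_add[OF P Q]
  have sG1: "spec_mat (cj Q P (G 1)) (Gb 1)" and sG2: "spec_mat (cj Q P (G 2)) (Gb 2)"
    using sG i12 unfolding cj_def by auto
  have sT: "spec_mat (cj Q P (T j)) (Tb j)" if "j \<in> {1..n}" for j using sT that unfolding cj_def by auto
  have Gb1: "Gb 1 \<in> carrier_mat m m" and Gb2: "Gb 2 \<in> carrier_mat m m"
    using spec_mat_carrier[OF sG1 cj_carrier[OF P Q G1]] spec_mat_carrier[OF sG2 cj_carrier[OF P Q G2]] by auto
  have zk: "spec_mat (cj Q P ((uu - 1) \<cdot>\<^sub>m Ed d m (T a) (T b))) (0\<^sub>m m m)"
    if "a \<in> {1..n}" "b \<in> {1..n}" for a b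
  proof -
    have Ta: "T a \<in> carrier_mat m m" "T b \<in> carrier_mat m m" using TC that by auto
    have s1: "spec_mat (cj Q P (Ed d m (T a) (T b))) (Ed d m (Tb a) (Tb b))"
      by (rule spec_cj_Ed[OF P Q PQ Ta d sT sT]) (use that in auto)
    have Eb: "Ed d m (Tb a) (Tb b) \<in> carrier_mat m m"
      by (rule spec_mat_carrier[OF s1 cj_carrier[OF P Q Ed_carrier[OF Ta]]])
    have "spec_mat (cj Q P ((uu - 1) \<cdot>\<^sub>m Ed d m (T a) (T b))) (0 \<cdot>\<^sub>m Ed d m (Tb a) (Tb b))"
      by (rule spec_cj_smult[OF P Q Ed_carrier[OF Ta] s1 spec1_uu1])
    moreover have "0 \<cdot>\<^sub>m Ed d m (Tb a) (Tb b) = (0\<^sub>m m m :: complex mat)" using Eb by (auto intro!: eq_matI)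
    ultimately show ?thesis by simp
  qed
  have sk1: "spec_mat (cj Q P k1) (0\<^sub>m m m)" unfolding k1_def E1_def by (rule zk) (use j123 in auto)
  have sk2: "spec_mat (cj Q P k2) (0\<^sub>m m m)" unfolding k2_def E2_def by (rule zk) (use j123 in auto)
  have sk3: "spec_mat (cj Q P k3) (0\<^sub>m m m)" unfolding k3_def E3_def by (rule zk) (use j123 in auto)
  have s1: "spec_mat (cj Q P (1\<^sub>m m)) (1\<^sub>m m)" by (rule spec_cj_one[OF P Q PQ])
  define Xb where "Xb = Gb 1 * Gb 2 * Gb 1 + Gb 1 * Gb 2 + Gb 2 * Gb 1 + Gb 1 + Gb 2 + 1\<^sub>m m"
  have sX: "spec_mat (cj Q P X) Xb" unfolding X_def Xelt_def Xb_def
    by (intro sc sG1 sG2 s1 G1 G2 cm one_carrier_mat)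
  define o1 where "o1 = 1\<^sub>m m + (0\<^sub>m m m :: complex mat)"
  have so: "spec_mat (cj Q P (1\<^sub>m m + k)) o1" if "k \<in> carrier_mat m m" "spec_mat (cj Q P k) (0\<^sub>m m m)" for k
    unfolding o1_def by (intro sc s1 that one_carrier_mat)
  define Lb where "Lb = 1\<^sub>m m + o1 + o1 * o1 + o1 + o1 * o1 + o1 * o1 * o1"
  have sL: "spec_mat (cj Q P L) Lb" unfolding L_def Lb_def
    by (intro sc s1 so sk1 sk2 sk3 k1 k2 k3 cm one_carrier_mat)
  have o1e: "o1 = 1\<^sub>m m" unfolding o1_def by simp
  have Lb6: "Lb = (6 :: complex) \<cdot>\<^sub>m 1\<^sub>m m" unfolding Lb_def o1e by (rule eq_matI) auto
  have Lbinj: "B = 0\<^sub>m m m" if "B \<in> carrier_mat m m" "Lb * B = 0\<^sub>m m m" for B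
  proof -
    have "Lb * B = 6 \<cdot>\<^sub>m B" unfolding Lb6 using that by (simp add: mult_smult_assoc_mat[of _ m m _ m])
    hence e: "6 \<cdot>\<^sub>m B = 0\<^sub>m m m" using that by simp
    show ?thesis
    proof (rule eq_matI)
      fix i j assume "i < dim_row (0\<^sub>m m m :: complex mat)" "j < dim_col (0\<^sub>m m m :: complex mat)"
      hence ij: "i < m" "j < m" by auto
      have "(6 \<cdot>\<^sub>m B) $$ (i, j) = 0" using e ij by simp
      thus "B $$ (i, j) = 0\<^sub>m m m $$ (i, j)" using ij that(1) by auto
    qed (use that(1) in auto)
  qed
  have q1b: "Gb 1 * Gb 1 = 1\<^sub>m m"
  proof -
    have "spec_mat (cj Q P (G 1 * G 1)) (Gb 1 * Gb 1)" by (intro sc sG1 G1)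
    moreover have "spec_mat (cj Q P (1\<^sub>m m + k1 + k1 * G 1)) (1\<^sub>m m + 0\<^sub>m m m + 0\<^sub>m m m * Gb 1)"
      by (intro sc s1 sk1 sG1 G1 k1 cm one_carrier_mat)
    ultimately have "Gb 1 * Gb 1 = 1\<^sub>m m + 0\<^sub>m m m + 0\<^sub>m m m * Gb 1" unfolding kq1 by (rule spec_mat_unique)
    thus ?thesis using Gb1 by simp
  qed
  have q2b: "Gb 2 * Gb 2 = 1\<^sub>m m"
  proof -
    have "spec_mat (cj Q P (G 2 * G 2)) (Gb 2 * Gb 2)" by (intro sc sG2 G2)
    moreover have "spec_mat (cj Q P (1\<^sub>m m + k2 + k2 * G 2)) (1\<^sub>m m + 0\<^sub>m m m + 0\<^sub>m m m * Gb 2)"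
      by (intro sc s1 sk2 sG2 G2 k2 cm one_carrier_mat)
    ultimately have "Gb 2 * Gb 2 = 1\<^sub>m m + 0\<^sub>m m m + 0\<^sub>m m m * Gb 2" unfolding kq2 by (rule spec_mat_unique)
    thus ?thesis using Gb2 by simp
  qed
  have brb: "Gb 1 * Gb 2 * Gb 1 = Gb 2 * Gb 1 * Gb 2"
  proof -
    have "spec_mat (cj Q P (G 1 * G 2 * G 1)) (Gb 1 * Gb 2 * Gb 1)" by (intro sc sG1 sG2 G1 G2 cm)
    moreover have "spec_mat (cj Q P (G 2 * G 1 * G 2)) (Gb 2 * Gb 1 * Gb 2)" by (intro sc sG1 sG2 G1 G2 cm)
    ultimately show ?thesis unfolding br by (rule spec_mat_unique)
  qed
  have tp: "Xb = 0\<^sub>m m m \<longleftrightarrow> \<not> triv_summand d n lam"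
    unfolding Xb_def by (rule triv_part[OF n iso Gb1 Gb2 q1b q2b brb])
  have "X = 0\<^sub>m m m \<longleftrightarrow> Xb = 0\<^sub>m m m"
  proof
    assume "X = 0\<^sub>m m m"
    hence "cj Q P X = 0\<^sub>m m m" using cj_zero[OF P Q] by simp
    hence "spec_mat (cj Q P X) (0\<^sub>m m m)" by (simp add: spec_mat_zero)
    with sX show "Xb = 0\<^sub>m m m" by (rule spec_mat_unique)
  next
    assume Xb0: "Xb = 0\<^sub>m m m"
    have AA: "cj Q P X * cj Q P X = cj Q P L * cj Q P X"
      using XX cj_mult[OF P Q PQ XC XC] cj_mult[OF P Q PQ LC XC] by simp
    have "cj Q P X = 0\<^sub>m m m"
      by (rule valuation_arg[OF cj_carrier[OF P Q XC] cj_carrier[OF P Q LC] _ sL Lbinj AA])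
        (use sX Xb0 in simp_all)
    hence "P * cj Q P X * Q = 0\<^sub>m m m" using P Q by simp
    moreover have "P * cj Q P X * Q = (P * Q) * X * (P * Q)"
    proof -
      have dm: "dim_row P = m" "dim_col P = m" "dim_row Q = m" "dim_col Q = m" "dim_row X = m" "dim_col X = m"
        using carrier_matD[OF P] carrier_matD[OF Q] carrier_matD[OF XC] by auto
      show ?thesis unfolding cj_def by (simp add: mdims dm)
    qed
    ultimately show "X = 0\<^sub>m m m" unfolding PQ using XC by simp
  qed
  with tp show ?thesis unfolding X_def by simp
qed

end
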